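(* Let $\mathcal{T}$ be a single-elimination tournament with at least two players, let $R$ be a uniformly random bracket of $\mathcal{T}$, and define $q_{\mathrm{pair}}=\min_{a,b\in P(\mathcal{T}),\,a\ne b}\Pr[R(x_{a,b})\in\{a,b\}]$. If $\mathcal{T}$ has $N$ total brackets, then for every scoring system $\sigma$, $\mathrm{res}(\mathcal{T},\sigma)>(1-q_{\mathrm{pair}})N$.
   Context: A single-elimination tournament is a finite directed graph $\mathcal{T}$ such that: (a) $\mathcal{T}$ has exactly one sink (vertex with no out-neighbours); (b) every non-sink vertex has exactly one out-neighbour; (c) $\mathcal{T}$ has no directed cycles; (d) $|N^-(v)|\ne 1$ for every vertex $v$, where $N^-(v)$ denotes the set of in-neighbours of $v$. The players $P(\mathcal{T})$ are the sources and the matches are $M(\mathcal{T})=V(\mathcal{T})\setminus P(\mathcal{T})$. For a vertex $u$, $P(u)$ is the set of players $a$ for which there is a directed walk from $a$ to $u$ (length $0$ allowed). For distinct players $a,b$, $x_{a,b}$ denotes the unique match $x$ having in-neighbours $u_a,u_b\in N^-(x)$ with $P(u_a)\cap\{a,b\}=\{a\}$ and $P(u_b)\cap\{a,b\}=\{b\}$ (such a match exists and is unique). A bracket is a function $B:V(\mathcal{T})\to P(\mathcal{T})$ with $B(a)=a$ for every player $a$ and $B(x)\in\{B(u):u\in N^-(x)\}$ for every match $x$. A scoring system is any function $\sigma:M(\mathcal{T})\to\mathbb{R}_{>0}$. For brackets $B,B'$ let $\mathrm{score}_\sigma(B,B')=\sum_{x\in M(\mathcal{T}):\,B(x)=B'(x)}\sigma(x)$.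 A set of brackets $\mathcal{B}$ is $\sigma$-resolving if for every pair of distinct brackets $B\ne B'$ there is $B_i\in\mathcal{B}$ with $\mathrm{score}_\sigma(B_i,B)\ne\mathrm{score}_\sigma(B_i,B')$. $\mathrm{res}(\mathcal{T},\sigma)$ is the minimum $r$ such that every set of $r$ brackets is $\sigma$-resolving. *)

theory Defs
  imports Complex_Main "HOL-Library.FuncSet"
begin

definition out_nbrs :: "('v \<times> 'v) set \<Rightarrow> 'v \<Rightarrow> 'v set" where
  "out_nbrs E v = {w. (v, w) \<in> E}"

definition in_nbrs :: "('v \<times> 'v) set \<Rightarrow> 'v \<Rightarrow> 'v set" where
  "in_nbrs E v = {u. (u, v) \<in> E}"

definition sinks :: "'v set \<Rightarrow> ('v \<times> 'v) set \<Rightarrow> 'v set" where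
  "sinks V E = {v \<in> V. out_nbrs E v = {}}"

definition single_elim_tournament :: "'v set \<Rightarrow> ('v \<times> 'v) set \<Rightarrow> bool" where
  "single_elim_tournament V E \<longleftrightarrow>
     finite V \<and> E \<subseteq> V \<times> V \<and>
     card (sinks V E) = 1 \<and>
     (\<forall>v \<in> V - sinks V E. card (out_nbrs E v) = 1) \<and>
     (\<forall>v. (v, v) \<notin> E\<^sup>+) \<and>
     (\<forall>v \<in> V. card (in_nbrs E v) \<noteq> 1)"

definition players :: "'v set \<Rightarrow> ('v \<times> 'v) set \<Rightarrow> 'v set" where
  "players V E = {v \<in> V. in_nbrs E v = {}}"

definition matches :: "'v set \<Rightarrow> ('v \<times> 'v) set \<Rightarrow> 'v set" where
  "matches V E = V - players V E"

definition players_of :: "'v set \<Rightarrow> ('v \<times> 'v) set \<Rightarrow> 'v \<Rightarrow> 'v set" where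
  "players_of V E u = {a \<in> players V E. (a, u) \<in> E\<^sup>*}"

definition meet_match :: "'v set \<Rightarrow> ('v \<times> 'v) set \<Rightarrow> 'v \<Rightarrow> 'v \<Rightarrow> 'v" where
  "meet_match V E a b = (THE x. x \<in> matches V E \<and>
      (\<exists>ua ub. ua \<in> in_nbrs E x \<and> ub \<in> in_nbrs E x \<and>
         players_of V E ua \<inter> {a, b} = {a} \<and> players_of V E ub \<inter> {a, b} = {b}))"

text \<open>Brackets, as functions V \<rightarrow> players that are \<open>undefined\<close> outside V
  (so that distinct brackets are distinct functions on V).\<close>
definition is_bracket :: "'v set \<Rightarrow> ('v \<times> 'v) set \<Rightarrow> ('v \<Rightarrow> 'v) \<Rightarrow> bool" where
  "is_bracket V E B \<longleftrightarrow> B \<in> extensional V \<and>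
     (\<forall>v \<in> V. B v \<in> players V E) \<and>
     (\<forall>a \<in> players V E. B a = a) \<and>
     (\<forall>x \<in> matches V E. B x \<in> B ` in_nbrs E x)"

definition brackets :: "'v set \<Rightarrow> ('v \<times> 'v) set \<Rightarrow> ('v \<Rightarrow> 'v) set" where
  "brackets V E = {B. is_bracket V E B}"

definition scoring_system :: "'v set \<Rightarrow> ('v \<times> 'v) set \<Rightarrow> ('v \<Rightarrow> real) \<Rightarrow> bool" where
  "scoring_system V E \<sigma> \<longleftrightarrow> (\<forall>x \<in> matches V E. \<sigma> x > 0)"

definition score :: "'v set \<Rightarrow> ('v \<times> 'v) set \<Rightarrow> ('v \<Rightarrow> real) \<Rightarrow> ('v \<Rightarrow> 'v) \<Rightarrow> ('v \<Rightarrow> 'v) \<Rightarrow> real" where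
  "score V E \<sigma> B B' = (\<Sum>x \<in> {x \<in> matches V E. B x = B' x}. \<sigma> x)"

definition resolving :: "'v set \<Rightarrow> ('v \<times> 'v) set \<Rightarrow> ('v \<Rightarrow> real) \<Rightarrow> ('v \<Rightarrow> 'v) set \<Rightarrow> bool" where
  "resolving V E \<sigma> S \<longleftrightarrow>
     (\<forall>B \<in> brackets V E. \<forall>B' \<in> brackets V E. B \<noteq> B' \<longrightarrow>
        (\<exists>Bi \<in> S. score V E \<sigma> Bi B \<noteq> score V E \<sigma> Bi B'))"

definition res :: "'v set \<Rightarrow> ('v \<times> 'v) set \<Rightarrow> ('v \<Rightarrow> real) \<Rightarrow> nat" where
  "res V E \<sigma> = (LEAST r. \<forall>S. S \<subseteq> brackets V E \<and> card S = r \<longrightarrow> resolving V E \<sigma> S)"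

definition pair_prob :: "'v set \<Rightarrow> ('v \<times> 'v) set \<Rightarrow> 'v \<Rightarrow> 'v \<Rightarrow> real" where
  "pair_prob V E a b =
     real (card {B \<in> brackets V E. B (meet_match V E a b) \<in> {a, b}}) / real (card (brackets V E))"

definition q_pair :: "'v set \<Rightarrow> ('v \<times> 'v) set \<Rightarrow> real" where
  "q_pair V E = Min {pair_prob V E a b | a b. a \<in> players V E \<and> b \<in> players V E \<and> a \<noteq> b}"

end

theory Submission
  imports Defs
begin

locale tourn =
  fixes V :: "'v set" and E :: "('v \<times> 'v) set"
  assumes set: "single_elim_tournament V E"
begin

abbreviation "PL \<equiv> players V E"
abbreviation "PO \<equiv> players_of V E"

lemma finV: "finite V" and EV: "E \<subseteq> V \<times> V" and acyc: "(v,v) \<notin> E\<^sup>+"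
  and indeg: "v \<in> V \<Longrightarrow> card (in_nbrs E v) \<noteq> 1"
  and sink1: "card (sinks V E) = 1"
  and outdeg: "v \<in> V - sinks V E \<Longrightarrow> card (out_nbrs E v) = 1"
  using set unfolding single_elim_tournament_def by auto

lemma finE: "finite E" using finV EV finite_subset by blast

lemma wfE: "wf E" using finite_acyclic_wf[OF finE] acyc unfolding acyclic_def by blast
lemma wfE': "wf (E\<inverse>)" using finite_acyclic_wf_converse[OF finE] acyc unfolding acyclic_def by blast

lemma det_out: "(v,w1) \<in> E \<Longrightarrow> (v,w2) \<in> E \<Longrightarrow> w1 = w2"
proof -
  assume h: "(v,w1) \<in> E" "(v,w2) \<in> E"
  hence "v \<in> V" using EV by auto
  moreover have "v \<notin> sinks V E" using h unfolding sinks_def out_nbrs_def by auto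
  ultimately have "card (out_nbrs E v) = 1" using outdeg by auto
  then obtain z where z: "out_nbrs E v = {z}" by (meson card_1_singletonE)
  have "w1 \<in> out_nbrs E v" "w2 \<in> out_nbrs E v" using h unfolding out_nbrs_def by auto
  thus ?thesis using z by auto
qed

lemma det: assumes "(c,x) \<in> E\<^sup>*" "(c,u) \<in> E\<^sup>*" shows "(x,u) \<in> E\<^sup>* \<or> (u,x) \<in> E\<^sup>*"
  using assms
proof (induction arbitrary: u rule: converse_rtrancl_induct)
  case base then show ?case by simp
next
  case (step c c')
  from step.prems show ?case
  proof (cases rule: converse_rtranclE)
    case base then show ?thesis using step.hyps by (meson converse_rtrancl_into_rtrancl)
  next
    case (step w)
    then have "w = c'" using det_out step.hyps(1) by blast
    then show ?thesis using step.IH step by blast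
  qed
qed

lemma no_in_player: "a \<in> PL \<Longrightarrow> (c,a) \<in> E\<^sup>+ \<Longrightarrow> False"
proof -
  assume h: "a \<in> PL" "(c,a) \<in> E\<^sup>+"
  then obtain z where "(z,a) \<in> E" using tranclD2 by metis
  thus False using h unfolding players_def in_nbrs_def by auto
qed

lemma PL_V: "PL \<subseteq> V" unfolding players_def by auto
lemma PO_PL: "PO v \<subseteq> PL" unfolding players_of_def by auto
lemma finPL: "finite PL" using PL_V finV finite_subset by blast
lemma finPO: "finite (PO v)" using PO_PL finPL finite_subset by blast

lemma PO_player: "a \<in> PL \<Longrightarrow> PO a = {a}"
  unfolding players_of_def using no_in_player by (auto simp: rtrancl_eq_or_trancl)

lemma PO_mono: "(u,v) \<in> E \<Longrightarrow> PO u \<subseteq> PO v"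
  unfolding players_of_def by auto

lemma PO_ne: "v \<in> V \<Longrightarrow> PO v \<noteq> {}"
proof (induction v rule: wf_induct[OF wfE])
  case (1 v)
  show ?case
  proof (cases "in_nbrs E v = {}")
    case True
    then have "v \<in> PL" using 1 unfolding players_def by auto
    then show ?thesis using PO_player by auto
  next
    case False
    then obtain u where u: "(u,v) \<in> E" unfolding in_nbrs_def by auto
    then have "u \<in> V" using EV by auto
    then have "PO u \<noteq> {}" using 1 u by auto
    then show ?thesis using PO_mono[OF u] by auto
  qed
qed

lemma PO_match: "x \<in> matches V E \<Longrightarrow> PO x = (\<Union>u \<in> in_nbrs E x. PO u)"
proof
  assume x: "x \<in> matches V E"
  show "PO x \<subseteq> (\<Union>u \<in> in_nbrs E x. PO u)"
  proof
    fix c assume c: "c \<in> PO x"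
    then have "c \<noteq> x" "c \<in> PL" "(c,x) \<in> E\<^sup>*" using x unfolding players_of_def matches_def by auto
    then have "(c,x) \<in> E\<^sup>+" by (simp add: rtrancl_eq_or_trancl)
    then obtain u where "(c,u) \<in> E\<^sup>*" "(u,x) \<in> E" using tranclD2 by metis
    then show "c \<in> (\<Union>u \<in> in_nbrs E x. PO u)" using \<open>c \<in> PL\<close>
      unfolding players_of_def in_nbrs_def by auto
  qed
  show "(\<Union>u \<in> in_nbrs E x. PO u) \<subseteq> PO x" using PO_mono unfolding in_nbrs_def by auto
qed

lemma disj: assumes "(u1,y) \<in> E" "(u2,y) \<in> E" "c \<in> PO u1" "c \<in> PO u2" shows "u1 = u2"
proof (rule ccontr)
  assume ne: "u1 \<noteq> u2"
  have "(c,u1) \<in> E\<^sup>*" "(c,u2) \<in> E\<^sup>*" using assms unfolding players_of_def by auto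
  then have "(u1,u2) \<in> E\<^sup>* \<or> (u2,u1) \<in> E\<^sup>*" using det by blast
  moreover have False if "(u1,u2) \<in> E\<^sup>*" "(u2,y) \<in> E" "(u1,y) \<in> E" "u1 \<noteq> u2" for u1 u2
  proof -
    have "(u1,u2) \<in> E\<^sup>+" using that by (simp add: rtrancl_eq_or_trancl)
    then obtain w where "(u1,w) \<in> E" "(w,u2) \<in> E\<^sup>*" using tranclD by metis
    then have "w = y" using det_out that by blast
    then have "(y,y) \<in> E\<^sup>+" using \<open>(w,u2) \<in> E\<^sup>*\<close> that(2) by auto
    then show False using acyc by blast
  qed
  ultimately show False using assms ne by metis
qed

lemma root: obtains r where "sinks V E = {r}" "\<And>v. v \<in> V \<Longrightarrow> (v,r) \<in> E\<^sup>*"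
proof -
  obtain r where r: "sinks V E = {r}" using sink1 by (meson card_1_singletonE)
  have "v \<in> V \<Longrightarrow> (v,r) \<in> E\<^sup>*" for v
  proof (induction v rule: wf_induct[OF wfE'])
    case (1 v)
    show ?case
    proof (cases "v \<in> sinks V E")
      case True then show ?thesis using r by auto
    next
      case False
      then obtain w where w: "(v,w) \<in> E" using 1 unfolding sinks_def out_nbrs_def by auto
      then have "w \<in> V" using EV by auto
      then have "(w,r) \<in> E\<^sup>*" using 1 w by auto
      then show ?thesis using w by auto
    qed
  qed
  then show ?thesis using that r by blast
qed

definition "QM a b x \<longleftrightarrow> x \<in> matches V E \<and>
      (\<exists>ua ub. ua \<in> in_nbrs E x \<and> ub \<in> in_nbrs E x \<and>
         PO ua \<inter> {a, b} = {a} \<and> PO ub \<inter> {a, b} = {b})"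

lemma QM_ex: assumes "a \<in> PL" "b \<in> PL" "a \<noteq> b" shows "\<exists>x. QM a b x"
proof -
  obtain r where r: "\<And>v. v \<in> V \<Longrightarrow> (v,r) \<in> E\<^sup>*" using root by blast
  define Z where "Z = {z. (a,z) \<in> E\<^sup>* \<and> (b,z) \<in> E\<^sup>*}"
  have "r \<in> Z" using r assms PL_V unfolding Z_def by auto
  then obtain x where x: "x \<in> Z" and xmin: "\<And>y. (y,x) \<in> E \<Longrightarrow> y \<notin> Z"
    using wfE_min[OF wfE] by metis
  have "x \<noteq> a"
  proof
    assume "x = a"
    then have "(b,a) \<in> E\<^sup>+" using x assms unfolding Z_def by (simp add: rtrancl_eq_or_trancl)
    then show False using no_in_player assms by blast
  qed
  moreover have "x \<noteq> b"
  proof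
    assume "x = b"
    then have "(a,b) \<in> E\<^sup>+" using x assms unfolding Z_def by (simp add: rtrancl_eq_or_trancl)
    then show False using no_in_player assms by blast
  qed
  ultimately have "(a,x) \<in> E\<^sup>+" "(b,x) \<in> E\<^sup>+" using x unfolding Z_def by (auto simp add: rtrancl_eq_or_trancl)
  then obtain ua ub where ua: "(a,ua) \<in> E\<^sup>*" "(ua,x) \<in> E" and ub: "(b,ub) \<in> E\<^sup>*" "(ub,x) \<in> E"
    using tranclD2 by metis
  have "ua \<notin> Z" "ub \<notin> Z" using xmin ua ub by auto
  then have "PO ua \<inter> {a,b} = {a}" "PO ub \<inter> {a,b} = {b}"
    using ua ub assms unfolding Z_def players_of_def by auto
  moreover have "x \<in> V" using ua EV by auto
  moreover have "x \<notin> PL" using ua unfolding players_def in_nbrs_def by auto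
  ultimately show ?thesis unfolding QM_def matches_def in_nbrs_def using ua ub by blast
qed

lemma QM_uniq: assumes "QM a b x" "QM a b x'" and ab: "a \<noteq> b" shows "x = x'"
proof -
  have L: "False" if q1: "QM a b x" and q2: "QM a b x'" and q3: "(x,x') \<in> E\<^sup>*" and q4: "x \<noteq> x'" for x x'
  proof -
    obtain ua ub where u: "(ua,x) \<in> E" "(ub,x) \<in> E" "PO ua \<inter> {a, b} = {a}" "PO ub \<inter> {a, b} = {b}"
      using q1 unfolding QM_def in_nbrs_def mem_Collect_eq by blast
    obtain ua' ub' where u': "(ua',x') \<in> E" "(ub',x') \<in> E" "PO ua' \<inter> {a, b} = {a}" "PO ub' \<inter> {a, b} = {b}"
      using q2 unfolding QM_def in_nbrs_def mem_Collect_eq by blast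
    have "(x,x') \<in> E\<^sup>+" using q3 q4 by (simp add: rtrancl_eq_or_trancl)
    then obtain w where w: "(x,w) \<in> E\<^sup>*" "(w,x') \<in> E" using tranclD2 by metis
    have "PO x \<subseteq> PO w" using w unfolding players_of_def by auto
    moreover have "a \<in> PO x" "b \<in> PO x" using u PO_mono by blast+
    ultimately have "a \<in> PO w" "b \<in> PO w" by auto
    then have "w = ua'" using disj[OF w(2) u'(1)] u' by blast
    then show False using u' \<open>b \<in> PO w\<close> ab by auto
  qed
  have "a \<in> PO x" "a \<in> PO x'" using assms PO_mono unfolding QM_def in_nbrs_def by blast+
  then have "(x,x') \<in> E\<^sup>* \<or> (x',x) \<in> E\<^sup>*" using det unfolding players_of_def by blast
  then show ?thesis using L assms(1,2) by metis
qed

lemma meet: assumes "a \<in> PL" "b \<in> PL" "a \<noteq> b" shows "QM a b (meet_match V E a b)"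
proof -
  have "\<exists>!x. QM a b x" using QM_ex[OF assms] QM_uniq assms(3) by blast
  then show ?thesis unfolding meet_match_def QM_def[symmetric] by (rule theI')
qed

definition rbr :: "('v \<Rightarrow> nat) \<Rightarrow> 'v \<Rightarrow> 'v" where
  "rbr rk v = (if v \<in> V then (THE c. c \<in> PO v \<and> (\<forall>d \<in> PO v. rk c \<le> rk d)) else undefined)"

lemma rbr_char: assumes "inj_on rk PL" "v \<in> V" "c \<in> PO v" "\<forall>d \<in> PO v. rk c \<le> rk d"
  shows "rbr rk v = c"
proof -
  have "(THE c. c \<in> PO v \<and> (\<forall>d \<in> PO v. rk c \<le> rk d)) = c"
  proof (rule the_equality)
    show "c \<in> PO v \<and> (\<forall>d \<in> PO v. rk c \<le> rk d)" using assms by auto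
    fix c' assume "c' \<in> PO v \<and> (\<forall>d \<in> PO v. rk c' \<le> rk d)"
    then have "rk c' = rk c" "c' \<in> PL" "c \<in> PL" using assms PO_PL by (auto intro: order.antisym)
    then show "c' = c" using assms(1) inj_on_def by metis
  qed
  then show ?thesis using assms unfolding rbr_def by auto
qed

lemma rbr_ex: fixes rk :: "'v \<Rightarrow> nat" assumes "v \<in> V" shows "\<exists>c \<in> PO v. \<forall>d \<in> PO v. rk c \<le> rk d"
proof -
  have "Min (rk ` PO v) \<in> rk ` PO v" using finPO PO_ne[OF assms] by auto
  then obtain c where "c \<in> PO v" "rk c = Min (rk ` PO v)" by auto
  then show ?thesis using finPO by (metis Min_le finite_imageI image_eqI)
qed

lemma rbr_in: assumes "inj_on rk PL" "v \<in> V" shows "rbr rk v \<in> PO v"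
  using rbr_ex[OF assms(2)] rbr_char[OF assms] by metis

lemma rbr_bracket: assumes "inj_on rk PL" shows "is_bracket V E (rbr rk)"
  unfolding is_bracket_def
proof (intro conjI ballI)
  show "rbr rk \<in> extensional V" unfolding rbr_def extensional_def by auto
  fix v assume "v \<in> V" then show "rbr rk v \<in> PL" using rbr_in[OF assms] PO_PL by auto
next
  fix a assume a: "a \<in> PL"
  then show "rbr rk a = a" using rbr_char[OF assms, of a a] PO_player PL_V by auto
next
  fix x assume x: "x \<in> matches V E"
  then have xV: "x \<in> V" unfolding matches_def by auto
  obtain c where c: "c \<in> PO x" "\<forall>d \<in> PO x. rk c \<le> rk d" using rbr_ex[OF xV] by blast
  then obtain u where u: "u \<in> in_nbrs E x" "c \<in> PO u" using PO_match[OF x] by auto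
  have uV: "u \<in> V" using u EV unfolding in_nbrs_def by auto
  have "PO u \<subseteq> PO x" using u PO_match[OF x] by auto
  then have "rbr rk u = c" using rbr_char[OF assms uV u(2)] c by auto
  moreover have "rbr rk x = c" using rbr_char[OF assms xV c(1)] c by auto
  ultimately show "rbr rk x \<in> rbr rk ` in_nbrs E x" using u by auto
qed


lemma key: assumes ab: "a \<in> PL" "b \<in> PL" "a \<noteq> b" and xdef: "x = meet_match V E a b"
  shows "\<exists>B B'. is_bracket V E B \<and> is_bracket V E B' \<and> B \<noteq> B' \<and>
     (\<forall>C. C x \<notin> {a,b} \<longrightarrow> {z \<in> matches V E. C z = B z} = {z \<in> matches V E. C z = B' z})"
proof -
  have "QM a b x" using meet[OF ab] xdef by simp
  then obtain ua ub where x: "x \<in> matches V E" and u: "(ua,x) \<in> E" "(ub,x) \<in> E"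
    "PO ua \<inter> {a, b} = {a}" "PO ub \<inter> {a, b} = {b}"
    unfolding QM_def in_nbrs_def mem_Collect_eq by blast
  have xV: "x \<in> V" "x \<notin> PL" using x unfolding matches_def by auto
  have sub: "PO ua \<subseteq> PO x" "PO ub \<subseteq> PO x" using u PO_mono by auto
  have inx: "a \<in> PO x" "b \<in> PO x" "a \<notin> PO ub" "a \<in> PO ua" "b \<in> PO ub" using u sub ab by auto
  have "\<exists>c0. (c0 = a \<or> c0 \<notin> PO x) \<and> (\<forall>y. (x,y) \<in> E \<longrightarrow> c0 \<in> PO y \<and> c0 \<noteq> a)"
  proof (cases "\<exists>y. (x,y) \<in> E")
    case True
    then obtain y where y: "(x,y) \<in> E" by blast
    then have yV: "y \<in> V" using EV by auto
    have fin: "finite (in_nbrs E y)" using finE unfolding in_nbrs_def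
      by (metis (no_types, lifting) EV finV finite_subset mem_Collect_eq mem_Sigma_iff subsetI subset_iff)
    have "x \<in> in_nbrs E y" using y unfolding in_nbrs_def by auto
    moreover have "in_nbrs E y \<noteq> {x}" using indeg[OF yV] by auto
    ultimately obtain w where w: "w \<in> in_nbrs E y" "w \<noteq> x" by blast
    then have wV: "w \<in> V" using EV unfolding in_nbrs_def by auto
    obtain c0 where c0: "c0 \<in> PO w" using PO_ne[OF wV] by blast
    have "c0 \<notin> PO x" using disj[of x y w c0] y w c0 unfolding in_nbrs_def by auto
    moreover have "c0 \<in> PO y" using PO_mono w c0 unfolding in_nbrs_def by auto
    moreover have "\<forall>y'. (x,y') \<in> E \<longrightarrow> y' = y" using det_out y by blast
    ultimately show ?thesis using inx by metis
  next
    case False then show ?thesis by blast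
  qed
  then obtain c0 where c0: "c0 = a \<or> c0 \<notin> PO x" "\<And>y. (x,y) \<in> E \<Longrightarrow> c0 \<in> PO y \<and> c0 \<noteq> a"
    by blast
  obtain f :: "'v \<Rightarrow> nat" where f: "inj_on f PL" using finite_imp_inj_to_nat_seg[OF finPL] by metis
  define rk where "rk d = (if d = c0 then 0 else if d = a then 1 else if d = b then 2 else f d + 3)" for d
  have rk: "inj_on rk PL" using f unfolding inj_on_def rk_def by auto
  define B where "B = rbr rk"
  have Bb: "is_bracket V E B" using rbr_bracket[OF rk] B_def by simp
  have Bx: "B x = a"
    unfolding B_def using rbr_char[OF rk xV(1) inx(1)] c0(1) inx unfolding rk_def by force
  have ubV: "ub \<in> V" using u EV by auto
  have Bub: "B ub = b"
  proof -
    have "\<forall>d\<in>PO ub. rk b \<le> rk d" using c0(1) inx sub ab unfolding rk_def by auto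
    then show ?thesis unfolding B_def using rbr_char[OF rk ubV inx(5)] by simp
  qed
  have By: "B y \<noteq> a" if "(x,y) \<in> E" for y
  proof -
    have "y \<in> V" using that EV by auto
    then have "B y = c0" unfolding B_def using rbr_char[OF rk _ , of y c0] c0(2)[OF that] unfolding rk_def by auto
    then show ?thesis using c0(2)[OF that] by auto
  qed
  define B' where "B' = B(x := b)"
  have ubx: "ub \<noteq> x" using u acyc by auto
  have B'b: "is_bracket V E B'"
    unfolding is_bracket_def
  proof (intro conjI ballI)
    show "B' \<in> extensional V" using Bb xV unfolding is_bracket_def B'_def extensional_def by auto
    fix v assume "v \<in> V" then show "B' v \<in> PL" using Bb ab unfolding is_bracket_def B'_def by auto
  next
    fix v assume "v \<in> PL" then show "B' v = v" using Bb xV unfolding is_bracket_def B'_def by auto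
  next
    fix z assume z: "z \<in> matches V E"
    show "B' z \<in> B' ` in_nbrs E z"
    proof (cases "z = x")
      case True
      then show ?thesis using Bub ubx u unfolding B'_def in_nbrs_def by force
    next
      case False
      obtain w where w: "w \<in> in_nbrs E z" "B z = B w" using Bb z unfolding is_bracket_def by force
      have "w \<noteq> x" using By w Bx unfolding in_nbrs_def by auto
      then show ?thesis using w False unfolding B'_def by force
    qed
  qed
  have "B \<noteq> B'" using Bx ab unfolding B'_def by (metis fun_upd_same)
  moreover have "\<forall>C. C x \<notin> {a,b} \<longrightarrow> {z \<in> matches V E. C z = B z} = {z \<in> matches V E. C z = B' z}"
    using Bx unfolding B'_def by auto
  ultimately show ?thesis using Bb B'b by blast
qed

end

theorem proposition4p4:
  fixes V :: "'v set" and E :: "('v \<times> 'v) set" and \<sigma> :: "'v \<Rightarrow> real" and N :: nat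
  assumes "single_elim_tournament V E"
    and "card (players V E) \<ge> 2"
    and "N = card (brackets V E)"
    and "scoring_system V E \<sigma>"
  shows "real (res V E \<sigma>) > (1 - q_pair V E) * real N"
proof -
  interpret tourn V E using assms(1) by unfold_locales
  have "brackets V E \<subseteq> PiE V (\<lambda>_. players V E)"
  proof
    fix B assume "B \<in> brackets V E"
    then have "B \<in> extensional V" "\<forall>v\<in>V. B v \<in> players V E" unfolding brackets_def is_bracket_def by auto
    then show "B \<in> PiE V (\<lambda>_. players V E)" by (simp add: PiE_iff)
  qed
  then have finB: "finite (brackets V E)"
    by (rule finite_subset) (intro finite_PiE finV finPL)
  define Sq where "Sq = {pair_prob V E a b | a b. a \<in> players V E \<and> b \<in> players V E \<and> a \<noteq> b}"
  have "Sq \<subseteq> (\<lambda>p. pair_prob V E (fst p) (snd p)) ` (players V E \<times> players V E)"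
  proof
    fix s assume "s \<in> Sq"
    then obtain a b where "s = pair_prob V E a b" "a \<in> players V E" "b \<in> players V E"
      unfolding Sq_def by blast
    then show "s \<in> (\<lambda>p. pair_prob V E (fst p) (snd p)) ` (players V E \<times> players V E)"
      by (intro image_eqI[where x="(a,b)"]) auto
  qed
  then have "finite Sq"
    by (rule finite_subset) (intro finite_imageI finite_cartesian_product finPL)
  moreover obtain a0 b0 where "a0 \<in> players V E" "b0 \<in> players V E" "a0 \<noteq> b0"
  proof -
    have "players V E \<noteq> {}" using assms(2) by auto
    then obtain a0 where a0: "a0 \<in> players V E" by blast
    have "card (players V E - {a0}) \<ge> 1" using assms(2) a0 finPL by simp
    then have "players V E - {a0} \<noteq> {}" by (metis card.empty not_one_le_zero)
    then obtain b0 where "b0 \<in> players V E - {a0}" by blast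
    then show ?thesis using a0 that by blast
  qed
  then have "pair_prob V E a0 b0 \<in> Sq" unfolding Sq_def by blast
  then have "Sq \<noteq> {}" by blast
  ultimately have "Min Sq \<in> Sq" by simp
  then obtain a b where ab: "a \<in> players V E" "b \<in> players V E" "a \<noteq> b"
    and q0: "Min Sq = pair_prob V E a b" unfolding Sq_def mem_Collect_eq by blast
  have q: "q_pair V E = pair_prob V E a b" unfolding q_pair_def Sq_def[symmetric] by (rule q0)
  define x where "x = meet_match V E a b"
  obtain B B' where BB: "is_bracket V E B" "is_bracket V E B'" "B \<noteq> B'"
    "\<And>C. C x \<notin> {a,b} \<Longrightarrow> {z \<in> matches V E. C z = B z} = {z \<in> matches V E. C z = B' z}"
    using key[OF ab x_def] by blast
  define S0 where "S0 = {C \<in> brackets V E. C x \<notin> {a,b}}"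
  define S1 where "S1 = {C \<in> brackets V E. C x \<in> {a,b}}"
  have nr: "\<not> resolving V E \<sigma> T" if "T \<subseteq> S0" for T
  proof
    assume "resolving V E \<sigma> T"
    then obtain Bi where "Bi \<in> T" "score V E \<sigma> Bi B \<noteq> score V E \<sigma> Bi B'"
      using BB unfolding resolving_def brackets_def by blast
    moreover have "Bi x \<notin> {a,b}" using that \<open>Bi \<in> T\<close> unfolding S0_def by auto
    ultimately show False using BB(4) unfolding score_def by metis
  qed
  define Pr where "Pr r = (\<forall>S. S \<subseteq> brackets V E \<and> card S = r \<longrightarrow> resolving V E \<sigma> S)" for r
  have "Pr (Suc N)" unfolding Pr_def
  proof (intro allI impI)
    fix S assume "S \<subseteq> brackets V E \<and> card S = Suc N"
    then have "card S \<le> N" "card S = Suc N" using assms(3) finB card_mono by blast+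
    then show "resolving V E \<sigma> S" by simp
  qed
  then have Pres: "Pr (res V E \<sigma>)" unfolding res_def Pr_def[symmetric] by (rule LeastI)
  have finS0: "finite S0" using finB unfolding S0_def by auto
  have gt: "res V E \<sigma> > card S0"
  proof (rule ccontr)
    assume "\<not> ?thesis"
    then obtain T where "T \<subseteq> S0" "card T = res V E \<sigma>"
      using obtain_subset_with_card_n by (metis not_less)
    moreover have "S0 \<subseteq> brackets V E" unfolding S0_def by auto
    ultimately show False using Pres nr unfolding Pr_def by blast
  qed
  have "S0 \<union> S1 = brackets V E" "S0 \<inter> S1 = {}" unfolding S0_def S1_def by auto
  then have cs: "card S0 + card S1 = N" using assms(3) finB
    by (metis card_Un_disjoint finite_Un)
  have "B \<in> brackets V E" using BB unfolding brackets_def by auto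
  then have "N > 0" using assms(3) finB card_gt_0_iff by blast
  have "pair_prob V E a b = real (card S1) / real N"
    unfolding pair_prob_def S1_def x_def assms(3) by simp
  then have "(1 - q_pair V E) * real N = real (card S0)"
    using q cs \<open>N > 0\<close> by (simp add: field_simps)
  then show ?thesis using gt by simp
qed

end
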